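(* Let $G=(V,E)$ be a graph with maximum degree $\Delta\ge 1$, let $I_i\subseteq V$ be an independent set, let $A_i = V\setminus \hat\Gamma(I_i)$, and write $\deg_i,\Gamma_i,\hat\Gamma_i$ for degree, neighborhood and closed neighborhood in the induced subgraph $G(A_i)$. Perform one stage: each $v\in A_i$ independently selects itself with probability $\frac{1}{\Delta+1}$, and $I_{i+1} = I_i\cup\{v\in A_i : v \text{ is the only vertex of } \hat\Gamma_i(v) \text{ that selected itself}\}$; let $A_{i+1}=V\setminus\hat\Gamma(I_{i+1})$. Let $S\subseteq A_i$ be such that $\operatorname{dist}_G(u,u')\ge 5$ for all distinct $u,u'\in S$ and $\deg_i(u)\ge \Delta/2$ for all $u\in S$. Then $\Pr[S\subseteq A_{i+1}] \le p^{|S|}$, where $p = 1-(1-e^{-1/2})e^{-1}\approx 0.85$.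
   Context: For $U\subseteq V$, $\hat\Gamma(U)$ denotes $U$ together with all neighbors of vertices in $U$; for a vertex $v$, $\hat\Gamma(v)=\Gamma(v)\cup\{v\}$. $\operatorname{dist}_G$ is shortest-path distance in $G$. $G(U)$ denotes the subgraph induced by $U$. *)

theory Defs
  imports "HOL-Probability.Probability"
begin

definition simple_graph :: "'a set \<Rightarrow> ('a \<Rightarrow> 'a \<Rightarrow> bool) \<Rightarrow> bool" where
  "simple_graph V E \<longleftrightarrow> finite V \<and> (\<forall>u v. E u v \<longrightarrow> u \<in> V \<and> v \<in> V)
     \<and> (\<forall>u v. E u v \<longrightarrow> E v u) \<and> (\<forall>v. \<not> E v v)"

text \<open>Neighbourhood of v inside the vertex set U (so U = V gives Gamma(v),
U = A gives the neighbourhood in the induced subgraph G(A)).\<close>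
definition nbhd_in :: "('a \<Rightarrow> 'a \<Rightarrow> bool) \<Rightarrow> 'a set \<Rightarrow> 'a \<Rightarrow> 'a set" where
  "nbhd_in E U v = {u \<in> U. E v u}"

definition deg_in :: "('a \<Rightarrow> 'a \<Rightarrow> bool) \<Rightarrow> 'a set \<Rightarrow> 'a \<Rightarrow> nat" where
  "deg_in E U v = card (nbhd_in E U v)"

definition max_degree :: "'a set \<Rightarrow> ('a \<Rightarrow> 'a \<Rightarrow> bool) \<Rightarrow> nat" where
  "max_degree V E = Max (deg_in E V ` V)"

definition closed_nbhd_set :: "'a set \<Rightarrow> ('a \<Rightarrow> 'a \<Rightarrow> bool) \<Rightarrow> 'a set \<Rightarrow> 'a set" where
  "closed_nbhd_set V E U = U \<union> {u \<in> V. \<exists>w\<in>U. E w u}"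

definition independent_set :: "'a set \<Rightarrow> ('a \<Rightarrow> 'a \<Rightarrow> bool) \<Rightarrow> 'a set \<Rightarrow> bool" where
  "independent_set V E I \<longleftrightarrow> I \<subseteq> V \<and> (\<forall>u\<in>I. \<forall>v\<in>I. \<not> E u v)"

text \<open>Shortest-path distance (infinity if not connected).\<close>
definition edge_rel :: "'a set \<Rightarrow> ('a \<Rightarrow> 'a \<Rightarrow> bool) \<Rightarrow> ('a \<times> 'a) set" where
  "edge_rel V E = {(x, y). x \<in> V \<and> y \<in> V \<and> E x y}"

definition graph_dist :: "'a set \<Rightarrow> ('a \<Rightarrow> 'a \<Rightarrow> bool) \<Rightarrow> 'a \<Rightarrow> 'a \<Rightarrow> enat" where
  "graph_dist V E u v = Inf {enat n | n. (u, v) \<in> (edge_rel V E) ^^ n}"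

definition next_I :: "('a \<Rightarrow> 'a \<Rightarrow> bool) \<Rightarrow> 'a set \<Rightarrow> 'a set \<Rightarrow> ('a \<Rightarrow> bool) \<Rightarrow> 'a set" where
  "next_I E I A sel = I \<union> {v \<in> A. sel v \<and> (\<forall>u \<in> nbhd_in E A v. \<not> sel u)}"

end

theory Submission
  imports Defs
begin


lemma prob_pair_Times:
  "measure_pmf.prob (pair_pmf M N) (A \<times> B) = measure_pmf.prob M A * measure_pmf.prob N B"
proof -
  have "measure_pmf.prob (pair_pmf M N) (A \<times> B) = measure_pmf.prob (pair_pmf M N) ((A \<times> B) \<inter> set_pmf (pair_pmf M N))"
    by (rule measure_Int_set_pmf[symmetric])
  also have "(A \<times> B) \<inter> set_pmf (pair_pmf M N) = (A \<inter> set_pmf M) \<times> (B \<inter> set_pmf N)"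
    by (auto simp: set_pair_pmf)
  also have "measure_pmf.prob (pair_pmf M N) \<dots> = measure_pmf.prob M (A \<inter> set_pmf M) * measure_pmf.prob N (B \<inter> set_pmf N)"
    by (rule measure_pmf_prob_product) (auto intro: countable_Int2)
  finally show ?thesis by (simp add: measure_Int_set_pmf)
qed

lemma prob_Pi_pmf_local:
  assumes "finite D" "D' \<subseteq> D" "B \<subseteq> D'" "\<And>f g. (\<forall>x\<in>B. f x = g x) \<Longrightarrow> Q f = Q g"
  shows "measure_pmf.prob (Pi_pmf D' d p) {f. Q f} = measure_pmf.prob (Pi_pmf D d p) {f. Q f}"
proof -
  have "Pi_pmf D' d p = map_pmf (\<lambda>f x. if x \<in> D' then f x else d) (Pi_pmf D d p)"
    by (rule Pi_pmf_subset[OF assms(1,2)])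
  hence "measure_pmf.prob (Pi_pmf D' d p) {f. Q f} = measure_pmf.prob (Pi_pmf D d p) ((\<lambda>f x. if x \<in> D' then f x else d) -` {f. Q f})"
    by (simp add: measure_map_pmf)
  also have "(\<lambda>f x. if x \<in> D' then f x else d) -` {f. Q f} = {f. Q f}"
  proof -
    have "Q (\<lambda>x. if x \<in> D' then f x else d) = Q f" for f
      by (rule assms(4)) (use assms(3) in auto)
    thus ?thesis by auto
  qed
  finally show ?thesis .
qed

lemma prob_Pi_pmf_indep:
  assumes "finite J" "finite D" "\<forall>j\<in>J. B j \<subseteq> D" "disjoint_family_on B J"
    "\<And>j f g. j \<in> J \<Longrightarrow> (\<forall>x\<in>B j. f x = g x) \<Longrightarrow> Q j f = Q j g"
  shows "measure_pmf.prob (Pi_pmf D d p) {f. \<forall>j\<in>J. Q j f} = (\<Prod>j\<in>J. measure_pmf.prob (Pi_pmf D d p) {f. Q j f})"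
  using assms
proof (induction J arbitrary: D rule: finite_induct)
  case empty
  then show ?case by simp
next
  case (insert j J)
  define C where "C = D - B j"
  have Qcong: "\<And>i f g. i \<in> J \<Longrightarrow> \<forall>x\<in>B i. f x = g x \<Longrightarrow> Q i f = Q i g"
    using insert.prems(4) by blast
  have fin: "finite (B j)" "finite C" using insert.prems by (auto simp: C_def intro: finite_subset)
  have DBC: "D = B j \<union> C" using insert.prems by (auto simp: C_def)
  let ?h = "\<lambda>(f,g) x. if x \<in> B j then f x else g x"
  have split: "Pi_pmf D d p = map_pmf ?h (pair_pmf (Pi_pmf (B j) d p) (Pi_pmf C d p))"
    unfolding DBC by (rule Pi_pmf_union) (use fin in \<open>auto simp: C_def\<close>)
  have BiC: "B i \<subseteq> C" if "i \<in> J" for i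
  proof -
    have "i \<noteq> j" using insert.hyps(2) that by auto
    hence "B i \<inter> B j = {}" using insert.prems(3) that unfolding disjoint_family_on_def by auto
    thus ?thesis using insert.prems(2) that by (auto simp: C_def)
  qed
  have pre: "?h -` {f. \<forall>i\<in>insert j J. Q i f} = {f. Q j f} \<times> {g. \<forall>i\<in>J. Q i g}"
  proof -
    have 1: "Q j (?h (f,g)) = Q j f" for f g
      by (rule insert.prems(4)) auto
    have 2: "Q i (?h (f,g)) = Q i g" if "i \<in> J" for i f g
      by (rule insert.prems(4)) (use BiC[OF that] that in \<open>auto simp: C_def\<close>)
    show ?thesis using 1 2 by auto
  qed
  have "measure_pmf.prob (Pi_pmf D d p) {f. \<forall>i\<in>insert j J. Q i f}
     = measure_pmf.prob (Pi_pmf (B j) d p) {f. Q j f} * measure_pmf.prob (Pi_pmf C d p) {g. \<forall>i\<in>J. Q i g}"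
    unfolding split measure_map_pmf pre prob_pair_Times ..
  also have "measure_pmf.prob (Pi_pmf (B j) d p) {f. Q j f} = measure_pmf.prob (Pi_pmf D d p) {f. Q j f}"
    by (rule prob_Pi_pmf_local[of D "B j" "B j"]) (use insert.prems in auto)
  also have "measure_pmf.prob (Pi_pmf C d p) {g. \<forall>i\<in>J. Q i g} = (\<Prod>i\<in>J. measure_pmf.prob (Pi_pmf C d p) {f. Q i f})"
    by (rule insert.IH[OF _ _ _ Qcong]) (use fin BiC insert.prems in \<open>auto simp: disjoint_family_on_def\<close>)
  also have "\<dots> = (\<Prod>i\<in>J. measure_pmf.prob (Pi_pmf D d p) {f. Q i f})"
    by (rule prod.cong[OF refl], rule prob_Pi_pmf_local[of D C "B i" for i], (use BiC insert.prems in \<open>auto simp: C_def\<close>)[3], rule Qcong)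
       (use BiC insert.prems in \<open>auto simp: C_def\<close>)
  finally show ?case using insert.hyps by simp
qed

lemma prob_cyl:
  assumes "finite D" "w \<in> D" "T \<subseteq> D" "w \<notin> T" "0 \<le> q" "q \<le> 1"
  shows "measure_pmf.prob (Pi_pmf D False (\<lambda>_. bernoulli_pmf q)) {f. f w \<and> (\<forall>x\<in>T. \<not> f x)} = q * (1-q) ^ card T"
proof -
  define Bs where "Bs x = (if x = w then {True} else if x \<in> T then {False} else UNIV)" for x
  have "{f. f w \<and> (\<forall>x\<in>T. \<not> f x)} = Pi D Bs"
    using assms(2,3,4) by (auto simp: Bs_def Pi_def)
  hence "measure_pmf.prob (Pi_pmf D False (\<lambda>_. bernoulli_pmf q)) {f. f w \<and> (\<forall>x\<in>T. \<not> f x)}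
      = (\<Prod>x\<in>D. measure_pmf.prob (bernoulli_pmf q) (Bs x))"
    using assms(1) by (simp add: measure_Pi_pmf_Pi)
  also have "\<dots> = (\<Prod>x\<in>D. (if x = w then q else if x \<in> T then 1 - q else 1))"
    by (rule prod.cong) (use assms in \<open>auto simp: Bs_def measure_pmf_single\<close>)
  also have "\<dots> = (\<Prod>x\<in>insert w T. (if x = w then q else if x \<in> T then 1 - q else 1))"
    by (rule prod.mono_neutral_right) (use assms in auto)
  also have "\<dots> = q * (\<Prod>x\<in>T. (if x = w then q else if x \<in> T then 1 - q else 1))"
    using assms by (subst prod.insert) (auto intro: finite_subset)
  also have "(\<Prod>x\<in>T. (if x = w then q else if x \<in> T then 1 - q else 1)) = (\<Prod>x\<in>T. 1 - q)"
    by (rule prod.cong) (use assms in auto)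
  finally show ?thesis by simp
qed



lemma analytic1:
  fixes D k :: nat
  assumes "D \<ge> 1" "real D + 2 \<le> 2 * real k"
  shows "(1 - 1/(real D + 1)) ^ k \<le> exp (-1/2)"
proof -
  define q where "q = 1/(real D + 1)"
  have q0: "0 \<le> q" "q \<le> 1" using assms by (auto simp: q_def field_simps)
  have "1 - q \<le> exp (-q)" using exp_ge_add_one_self[of "-q"] by simp
  hence "(1 - q) ^ k \<le> exp (-q) ^ k" by (rule power_mono) (use q0 in simp)
  also have "\<dots> = exp (real k * (-q))" by (rule exp_of_nat_mult[symmetric])
  also have "\<dots> \<le> exp (-1/2)"
  proof -
    have "real k * q \<ge> 1/2" using assms by (simp add: q_def field_simps)
    thus ?thesis by simp
  qed
  finally show ?thesis by (simp add: q_def)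
qed

lemma analytic2:
  fixes D :: nat
  assumes "D \<ge> 1"
  shows "exp (-1) \<le> (1 - 1/(real D + 1)) ^ D"
proof -
  have "1 + 1/real D \<le> exp (1/real D)" using exp_ge_add_one_self[of "1/real D"] by simp
  hence "(1 + 1/real D) ^ D \<le> exp (1/real D) ^ D" by (rule power_mono) simp
  also have "\<dots> = exp (real D * (1/real D))" by (rule exp_of_nat_mult[symmetric])
  also have "\<dots> = exp 1" using assms by simp
  finally have X: "(1 + 1/real D) ^ D \<le> exp 1" .
  have pos: "0 < (1 + 1/real D) ^ D" by (intro zero_less_power) (simp add: add_pos_nonneg)
  have eq: "1 - 1/(real D + 1) = 1 / (1 + 1/real D)" using assms by (simp add: field_simps)
  have "exp (-1) = 1 / exp (1::real)" by (simp add: exp_minus inverse_eq_divide)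
  also have "\<dots> \<le> 1 / (1 + 1/real D) ^ D" using X pos by (intro divide_left_mono) auto
  also have "\<dots> = (1 - 1/(real D + 1)) ^ D" by (simp add: eq power_one_over)
  finally show ?thesis .
qed

lemma vertex_bound:
  fixes N :: "'a \<Rightarrow> 'a set" and D :: nat
  assumes "finite A" "u \<in> A" "D \<ge> 1"
   "\<forall>w\<in>A. N w \<subseteq> A \<and> w \<notin> N w \<and> card (N w) \<le> D"
   "real D / 2 \<le> real (card (N u))"
  shows "measure_pmf.prob (Pi_pmf A False (\<lambda>_. bernoulli_pmf (1/(real D+1))))
           {f. \<not>(\<exists>w\<in>insert u (N u). f w \<and> (\<forall>x\<in>N w. \<not> f x))} \<le> 1 - (1 - exp(-1/2)) * exp(-1)"
proof -
  define q where "q = 1/(real D + 1)"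
  define M where "M = Pi_pmf A False (\<lambda>_. bernoulli_pmf q)"
  have q0: "0 \<le> q" "q \<le> 1" using assms by (auto simp: q_def field_simps)
  define Bad where "Bad = {f. \<exists>w\<in>insert u (N u). f w \<and> (\<forall>x\<in>N w. \<not> f x)}"
  have compl: "{f. \<not>(\<exists>w\<in>insert u (N u). f w \<and> (\<forall>x\<in>N w. \<not> f x))} = space (measure_pmf M) - Bad"
    by (auto simp: Bad_def)
  have finN: "finite (N u)" using assms by (auto intro: finite_subset)
  obtain ws where ws: "set ws = insert u (N u)" "distinct ws"
    using finite_distinct_list[of "insert u (N u)"] finN by auto
  define k where "k = length ws"
  have kc: "k = card (N u) + 1"
    using ws finN assms(2,4) by (simp add: k_def distinct_card[symmetric])
  have wsA: "set ws \<subseteq> A" using ws assms by auto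
  define T where "T j = set (take j ws) \<union> N (ws ! j)" for j
  define F where "F j = {f. f (ws ! j) \<and> (\<forall>x\<in>T j. \<not> f x)}" for j
  have sub: "(\<Union>j\<in>{..<k}. F j) \<subseteq> Bad"
  proof
    fix f assume "f \<in> (\<Union>j\<in>{..<k}. F j)"
    then obtain j where j: "j < k" "f \<in> F j" by auto
    have "ws ! j \<in> insert u (N u)" using j ws(1) nth_mem[of j ws] by (auto simp: k_def)
    thus "f \<in> Bad" using j by (auto simp: F_def T_def Bad_def)
  qed
  have lt: "ws ! i \<in> set (take j ws)" if "i < j" "j < k" for i j
  proof -
    have "take j ws ! i = ws ! i" using that by simp
    moreover have "i < length (take j ws)" using that by (simp add: k_def)
    ultimately show ?thesis by (metis nth_mem)
  qed
  have disj: "disjoint_family_on F {..<k}"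
    unfolding disjoint_family_on_def
  proof (intro ballI impI)
    fix i j assume ij: "i \<in> {..<k}" "j \<in> {..<k}" "i \<noteq> j"
    show "F i \<inter> F j = {}"
    proof (cases "i < j")
      case True thus ?thesis using lt[of i j] ij by (auto simp: F_def T_def)
    next
      case False hence "j < i" using ij by simp
      thus ?thesis using lt[of j i] ij by (auto simp: F_def T_def)
    qed
  qed
  have Fj: "measure_pmf.prob M (F j) \<ge> q * (1-q) ^ (j + D)" if "j < k" for j
  proof -
    have wj: "ws ! j \<in> A" using that wsA nth_mem[of j ws] by (auto simp: k_def)
    have TA: "T j \<subseteq> A" using wj wsA assms(4) set_take_subset[of j ws] by (auto simp: T_def)
    have nT: "ws ! j \<notin> T j"
      using that ws(2) wj assms(4) unfolding T_def k_def
      by (auto, metis distinct_take not_distinct_conv_prefix take_Suc_conv_app_nth)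
    have "measure_pmf.prob M (F j) = q * (1-q) ^ card (T j)"
      unfolding M_def F_def by (rule prob_cyl) (use assms(1) wj TA nT q0 in auto)
    moreover have "card (T j) \<le> j + D"
    proof -
      have "card (T j) \<le> card (set (take j ws)) + card (N (ws ! j))" unfolding T_def by (rule card_Un_le)
      moreover have "card (set (take j ws)) \<le> j" using card_length[of "take j ws"] by simp
      moreover have "card (N (ws ! j)) \<le> D" using assms(4) wj by auto
      ultimately show ?thesis by simp
    qed
    hence "(1-q) ^ (j + D) \<le> (1-q) ^ card (T j)" by (rule power_decreasing) (use q0 in auto)
    ultimately show ?thesis using q0 by (simp add: mult_left_mono)
  qed
  have "(1 - exp(-1/2)) * exp(-1) \<le> (1 - (1-q)^k) * (1-q)^D"
  proof (rule mult_mono)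
    have "real D + 2 \<le> 2 * real k" using assms(5) kc by simp
    thus "1 - exp (-1/2) \<le> 1 - (1-q)^k" using analytic1[OF assms(3)] by (simp add: q_def)
    show "exp (-1) \<le> (1-q)^D" using analytic2[OF assms(3)] by (simp add: q_def)
    show "0 \<le> 1 - (1-q)^k" using q0 by (simp add: power_le_one)
    show "0 \<le> exp (-1::real)" by simp
  qed
  also have "(1 - (1-q)^k) * (1-q)^D = (\<Sum>j<k. q * (1-q) ^ (j + D))"
  proof -
    have "1 - (1-q)^k = q * (\<Sum>j<k. (1-q)^j)" by (subst one_diff_power_eq) simp
    thus ?thesis by (simp add: sum_distrib_left sum_distrib_right power_add mult_ac)
  qed
  also have "\<dots> \<le> (\<Sum>j<k. measure_pmf.prob M (F j))" by (rule sum_mono) (use Fj in auto)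
  also have "\<dots> = measure_pmf.prob M (\<Union>j\<in>{..<k}. F j)"
    by (rule measure_pmf.finite_measure_finite_Union[symmetric]) (use disj in auto)
  also have "\<dots> \<le> measure_pmf.prob M Bad" by (rule measure_pmf.finite_measure_mono[OF sub]) simp
  finally have "(1 - exp(-1/2)) * exp(-1) \<le> measure_pmf.prob M Bad" .
  moreover have "measure_pmf.prob M {f. \<not>(\<exists>w\<in>insert u (N u). f w \<and> (\<forall>x\<in>N w. \<not> f x))} = 1 - measure_pmf.prob M Bad"
    unfolding compl by (rule measure_pmf.prob_compl) simp
  ultimately show ?thesis by (simp add: M_def q_def)
qed


theorem lemma4:
  fixes V :: "'a set" and E :: "'a \<Rightarrow> 'a \<Rightarrow> bool" and I S :: "'a set"
  assumes "simple_graph V E"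
    and "max_degree V E \<ge> 1"
    and "independent_set V E I"
    and "S \<subseteq> V - closed_nbhd_set V E I"
    and "\<forall>u\<in>S. \<forall>u'\<in>S. u \<noteq> u' \<longrightarrow> graph_dist V E u u' \<ge> 5"
    and "\<forall>u\<in>S. real (deg_in E (V - closed_nbhd_set V E I) u) \<ge> real (max_degree V E) / 2"
  shows "measure_pmf.prob
           (Pi_pmf (V - closed_nbhd_set V E I) False
              (\<lambda>_. bernoulli_pmf (1 / (real (max_degree V E) + 1))))
           {sel. S \<subseteq> V - closed_nbhd_set V E (next_I E I (V - closed_nbhd_set V E I) sel)}
         \<le> (1 - (1 - exp (-1/2)) * exp (-1)) ^ card S"
proof -
  define D where "D = max_degree V E"
  define A where "A = V - closed_nbhd_set V E I"
  define N where "N w = nbhd_in E A w" for w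
  define M where "M = Pi_pmf A False (\<lambda>_. bernoulli_pmf (1 / (real D + 1)))"
  define Good where "Good u f = (\<not>(\<exists>w\<in>insert u (N u). f w \<and> (\<forall>x\<in>N w. \<not> f x)))" for u and f :: "'a \<Rightarrow> bool"
  define Bs where "Bs u = insert u (N u) \<union> (\<Union>w\<in>insert u (N u). N w)" for u
  define R where "R = edge_rel V E"
  define c where "c = 1 - (1 - exp (-1/2)) * exp (-1::real)"
  have finV: "finite V" and EV: "\<And>u v. E u v \<Longrightarrow> u \<in> V \<and> v \<in> V"
    and Esym: "\<And>u v. E u v \<Longrightarrow> E v u" and Eirr: "\<And>v. \<not> E v v"
    using assms(1) by (auto simp: simple_graph_def)
  have finA: "finite A" using finV by (simp add: A_def)
  have SA: "S \<subseteq> A" using assms(4) by (simp add: A_def)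
  have finS: "finite S" using finA SA by (rule finite_subset[rotated])
  have NA: "N w \<subseteq> A" for w by (auto simp: N_def nbhd_in_def)
  have Ndeg: "card (N w) \<le> D" if "w \<in> A" for w
  proof -
    have "card (N w) \<le> card (nbhd_in E V w)"
      by (rule card_mono) (use finV in \<open>auto simp: N_def nbhd_in_def A_def\<close>)
    also have "\<dots> \<le> D" unfolding D_def max_degree_def deg_in_def[symmetric]
      by (rule Max_ge) (use finV that in \<open>auto simp: A_def\<close>)
    finally show ?thesis .
  qed
  have event: "{sel. S \<subseteq> V - closed_nbhd_set V E (next_I E I A sel)} = {f. \<forall>u\<in>S. Good u f}"
  proof -
    have "u \<in> V - closed_nbhd_set V E (next_I E I A f) \<longleftrightarrow> Good u f" if "u \<in> S" for u f
    proof -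
      have uA: "u \<in> A" using that SA by auto
      hence uV: "u \<in> V" and uI: "u \<notin> I" and uI2: "\<not>(\<exists>w\<in>I. E w u)" by (auto simp: A_def closed_nbhd_set_def)
      define J where "J = {v \<in> A. f v \<and> (\<forall>x \<in> N v. \<not> f x)}"
      have nI: "next_I E I A f = I \<union> J" by (simp add: next_I_def J_def N_def)
      have 1: "u \<in> I \<union> J \<longleftrightarrow> f u \<and> (\<forall>x\<in>N u. \<not> f x)" using uI uA by (auto simp: J_def)
      have 2: "(\<exists>w\<in>I \<union> J. E w u) \<longleftrightarrow> (\<exists>w\<in>N u. f w \<and> (\<forall>x\<in>N w. \<not> f x))"
      proof
        assume "\<exists>w\<in>I \<union> J. E w u"
        then obtain w where "w \<in> J" "E w u" using uI2 by auto
        thus "\<exists>w\<in>N u. f w \<and> (\<forall>x\<in>N w. \<not> f x)" using Esym[of w u]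
          by (auto simp: J_def N_def nbhd_in_def)
      next
        assume "\<exists>w\<in>N u. f w \<and> (\<forall>x\<in>N w. \<not> f x)"
        then obtain w where "w \<in> N u" "f w" "\<forall>x\<in>N w. \<not> f x" by auto
        thus "\<exists>w\<in>I \<union> J. E w u" using Esym[of u w]
          by (auto simp: J_def N_def nbhd_in_def)
      qed
      have "u \<in> V - closed_nbhd_set V E (I \<union> J) \<longleftrightarrow> \<not> (u \<in> I \<union> J) \<and> \<not> (\<exists>w\<in>I \<union> J. E w u)"
        using uV by (auto simp: closed_nbhd_set_def)
      also have "\<dots> \<longleftrightarrow> Good u f" unfolding 1 2 Good_def by auto
      finally show ?thesis unfolding nI .
    qed
    thus ?thesis by auto
  qed
  have near: "\<exists>n\<le>2. (u,x) \<in> R^^n \<and> (x,u) \<in> R^^n" if xB: "x \<in> Bs u" and uA0: "u \<in> A" for u x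
  proof -
    have e: "(a,b) \<in> R" if "b \<in> N a" "a \<in> A" for a b
      using that EV[of a b] by (auto simp: R_def edge_rel_def N_def nbhd_in_def)
    have e': "(b,a) \<in> R" if "b \<in> N a" "a \<in> A" for a b
      using that EV[of a b] Esym[of a b] by (auto simp: R_def edge_rel_def N_def nbhd_in_def)
    have r1: "(a,b) \<in> R^^1" if "(a,b) \<in> R" for a b using that by simp
    have r2: "(a,c) \<in> R^^2" if "(a,b) \<in> R" "(b,c) \<in> R" for a b c
      using relpow_Suc_I[OF relpow_Suc_I[OF relpow_0_I that(1)] that(2)] by (simp add: numeral_2_eq_2)
    consider "x = u" | "x \<in> N u" | w where "w \<in> N u" "x \<in> N w"
      using xB unfolding Bs_def by blast
    thus ?thesis
    proof cases
      case 1 thus ?thesis by (intro exI[of _ 0]) auto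
    next
      case 2 thus ?thesis using e[OF 2 uA0] e'[OF 2 uA0] by (intro exI[of _ 1]) auto
    next
      case 3
      have wA: "w \<in> A" using 3 NA by auto
      show ?thesis using 3 e[OF 3(1) uA0] e'[OF 3(1) uA0] e[OF 3(2) wA] e'[OF 3(2) wA]
        by (intro exI[of _ 2]) (auto intro: r2)
    qed
  qed
  have disj: "disjoint_family_on Bs S"
    unfolding disjoint_family_on_def
  proof (intro ballI impI)
    fix u u' assume uu: "u \<in> S" "u' \<in> S" "u \<noteq> u'"
    show "Bs u \<inter> Bs u' = {}"
    proof (rule ccontr)
      assume "Bs u \<inter> Bs u' \<noteq> {}"
      then obtain x where x: "x \<in> Bs u" "x \<in> Bs u'" by auto
      obtain n where n: "n \<le> 2" "(u,x) \<in> R^^n" using near[OF x(1)] uu SA by blast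
      obtain m where m: "m \<le> 2" "(x,u') \<in> R^^m" using near[OF x(2)] uu SA by blast
      have "(u,u') \<in> R^^(n+m)" using n m by (auto simp: relpow_add)
      hence "graph_dist V E u u' \<le> enat (n+m)"
        unfolding graph_dist_def R_def by (intro Inf_lower) auto
      moreover have "graph_dist V E u u' \<ge> 5" using assms(5) uu by auto
      ultimately have "(5::enat) \<le> enat (n+m)" by (rule order_trans[rotated])
      hence "5 \<le> n+m" by (simp add: numeral_eq_enat)
      thus False using n m by simp
    qed
  qed
  have Gcong: "Good u f = Good u g" if "\<forall>x\<in>Bs u. f x = g x" for u f g
  proof -
    have "(\<exists>w\<in>insert u (N u). f w \<and> (\<forall>x\<in>N w. \<not> f x)) = (\<exists>w\<in>insert u (N u). g w \<and> (\<forall>x\<in>N w. \<not> g x))"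
    proof (rule bex_cong[OF refl])
      fix w assume w: "w \<in> insert u (N u)"
      hence "f w = g w" "\<forall>x\<in>N w. f x = g x" using that unfolding Bs_def by blast+
      thus "(f w \<and> (\<forall>x\<in>N w. \<not> f x)) = (g w \<and> (\<forall>x\<in>N w. \<not> g x))" by auto
    qed
    thus ?thesis by (simp add: Good_def)
  qed
  have BsA: "Bs u \<subseteq> A" if "u \<in> A" for u using that NA by (auto simp: Bs_def)
  have "measure_pmf.prob M {f. \<forall>u\<in>S. Good u f} = (\<Prod>u\<in>S. measure_pmf.prob M {f. Good u f})"
    unfolding M_def
    by (rule prob_Pi_pmf_indep[OF finS finA _ disj]) (use BsA SA Gcong in auto)
  also have "\<dots> \<le> (\<Prod>u\<in>S. c)"
  proof (rule prod_mono, rule conjI)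
    fix u assume u: "u \<in> S"
    show "0 \<le> measure_pmf.prob M {f. Good u f}" by simp
    have uA: "u \<in> A" using u SA by auto
    have "real D / 2 \<le> real (card (N u))" using assms(6) u by (simp add: D_def A_def N_def deg_in_def)
    moreover have "\<forall>w\<in>A. N w \<subseteq> A \<and> w \<notin> N w \<and> card (N w) \<le> D"
      using NA Ndeg Eirr by (auto simp: N_def nbhd_in_def)
    moreover have "D \<ge> 1" using assms(2) by (simp add: D_def)
    ultimately show "measure_pmf.prob M {f. Good u f} \<le> c"
      unfolding M_def Good_def c_def by (intro vertex_bound[OF finA uA]) auto
  qed
  also have "\<dots> = c ^ card S" by simp
  finally show ?thesis using event by (simp add: M_def A_def D_def c_def)
qed

end
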